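(* Let $l_0<r_0$ and let $\rho_0:[l_0,r_0]\to[-1,1]$ be differentiable with bounded derivative, $\rho_0(l_0)=1$, $\rho_0(r_0)=-1$, and set $\bar l=(4\|\rho_0'\|_\infty)^{-1}$. Let $\tilde l$ (nondecreasing) and $\tilde r$ (nonincreasing) be continuous with $\tilde l(0)=l_0$, $\tilde r(0)=r_0$, $\tilde l<\tilde r$, and let $\rho$ solve $\partial_t\rho=\rho_{xx}$ on $\{(x,t):\tilde l(t)<x<\tilde r(t)\}$ with $\rho(\tilde l(t),t)=1$, $\rho(\tilde r(t),t)=-1$, $\rho(\cdot,0)=\rho_0$. If $\tau>0$ is such that $\tilde l(t)\le l_0+2\bar l$ and $\tilde r(t)\ge r_0-2\bar l$ for all $t<\tau$, then $$\rho(x,t)\ge0\ \ \forall t\le\tau,\ \forall x\in[\tilde l(t),l_0+2\bar l],\qquad \rho(x,t)\le0\ \ \forall t\le\tau,\ \forall x\in[r_0-2\bar l,\tilde r(t)].$$ *)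

theory Defs
  imports "HOL-Analysis.Analysis"
begin

definition closed_region :: "(real \<Rightarrow> real) \<Rightarrow> (real \<Rightarrow> real) \<Rightarrow> (real \<times> real) set" where
  "closed_region lt rt = {(x, t). 0 \<le> t \<and> lt t \<le> x \<and> x \<le> rt t}"

definition heat_solution ::
  "(real \<Rightarrow> real \<Rightarrow> real) \<Rightarrow> (real \<Rightarrow> real) \<Rightarrow> (real \<Rightarrow> real) \<Rightarrow> bool" where
  "heat_solution rho lt rt \<longleftrightarrow>
     continuous_on (closed_region lt rt) (\<lambda>(x, t). rho x t) \<and>
     (\<forall>x t. 0 < t \<and> lt t < x \<and> x < rt t \<longrightarrow>
        (\<lambda>y. rho y t) differentiable (at x) \<and>
        deriv (\<lambda>y. rho y t) differentiable (at x) \<and>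
        ((\<lambda>s. rho x s) has_real_derivative deriv (deriv (\<lambda>y. rho y t)) x) (at t))"

end

theory Submission
  imports Defs
begin

lemma spatial_min:
  fixes f :: "real \<Rightarrow> real"
  assumes lx: "l < x" and xr: "x < r"
    and dif: "\<forall>y. l<y \<and> y<r \<longrightarrow> f differentiable (at y)"
    and dd: "deriv f differentiable (at x)"
    and mn: "\<forall>y. l<y \<and> y<r \<longrightarrow> s*f x - b*x \<le> s*f y - b*y"
  shows "s * deriv (deriv f) x \<ge> 0"
proof (rule ccontr)
  assume neg: "\<not> ?thesis"
  define h where "h = (\<lambda>y. s*f y - b*y)"
  define g where "g = (\<lambda>y. s*deriv f y - b)"
  have hd: "(h has_real_derivative g y) (at y)" if "l<y" "y<r" for y
  proof -
    have "(f has_real_derivative deriv f y) (at y)"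
      using dif that DERIV_deriv_iff_real_differentiable by blast
    then show ?thesis unfolding h_def g_def
      by (auto intro!: derivative_eq_intros)
  qed
  have "g x = 0"
  proof (rule DERIV_local_min[OF hd[OF lx xr]])
    show "0 < min (x-l) (r-x)" using lx xr by simp
    show "\<forall>y. \<bar>x - y\<bar> < min (x - l) (r - x) \<longrightarrow> h x \<le> h y"
      using mn unfolding h_def by (auto simp: abs_if split: if_splits)
  qed
  have "(deriv f has_real_derivative deriv (deriv f) x) (at x)"
    using dd DERIV_deriv_iff_real_differentiable by blast
  then have "(g has_real_derivative s * deriv (deriv f) x) (at x)"
    unfolding g_def by (auto intro!: derivative_eq_intros)
  from DERIV_neg_dec_right[OF this] neg obtain d where d: "d>0"
    "\<forall>k>0. k < d \<longrightarrow> g x > g (x + k)" by force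
  define h0 where "h0 = min (d/2) ((r-x)/2)"
  have h0a: "h0 \<le> (r-x)/2" "h0 \<le> d/2" unfolding h0_def by (rule min.cobounded2, rule min.cobounded1)
  have h0: "h0 > 0" "h0 < d" "x + h0 < r" using d xr h0a unfolding h0_def by auto
  obtain z where z: "x < z" "z < x + h0" "h (x+h0) - h x = (x + h0 - x) * g z"
    using MVT2[of x "x+h0" h g] hd h0 lx by force
  have "g z < 0" using d(2)[rule_format, of "z - x"] z h0 \<open>g x = 0\<close> by auto
  then have "h0 * g z < 0" using h0(1) by (simp add: mult_pos_neg)
  then have "h (x+h0) < h x" using z(3) by simp
  moreover have "h x \<le> h (x+h0)" using mn h0 lx unfolding h_def by auto
  ultimately show False by simp
qed

lemma core:
  fixes rho :: "real \<Rightarrow> real \<Rightarrow> real" and lt rt :: "real \<Rightarrow> real" and s a b T :: real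
  assumes hs: "heat_solution rho lt rt" and mono: "mono_on {0..} lt" and anti: "antimono_on {0..} rt"
    and clt: "continuous_on {0..} lt" and crt: "continuous_on {0..} rt" and T0: "T \<ge> 0"
    and bl: "\<forall>t. 0\<le>t \<and> t\<le>T \<longrightarrow> s * rho (lt t) t - (a + b * lt t) \<ge> 0"
    and br: "\<forall>t. 0\<le>t \<and> t\<le>T \<longrightarrow> s * rho (rt t) t - (a + b * rt t) \<ge> 0"
    and bi: "\<forall>x. lt 0 \<le> x \<and> x \<le> rt 0 \<longrightarrow> s*rho x 0 - (a+b*x) \<ge> 0"
  shows "\<forall>t x. 0\<le>t \<and> t\<le>T \<and> lt t \<le> x \<and> x \<le> rt t \<longrightarrow> s*rho x t - (a+b*x) \<ge> 0"
proof (rule ccontr)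
  assume "\<not> ?thesis"
  then obtain t0 x0 where p0: "0\<le>t0" "t0\<le>T" "lt t0 \<le> x0" "x0 \<le> rt t0"
    and neg: "s*rho x0 t0 - (a+b*x0) < 0" by auto
  define \<eta> where "\<eta> = -(s*rho x0 t0 - (a+b*x0))"
  define \<epsilon> where "\<epsilon> = \<eta>/(2*(T+1))"
  have eta: "\<eta> > 0" using neg by (simp add: \<eta>_def)
  have eps: "\<epsilon> > 0" using eta T0 by (simp add: \<epsilon>_def)
  have epsT: "\<epsilon>*T < \<eta>"
  proof -
    have "\<epsilon>*T = \<eta> * (T/(2*(T+1)))" by (simp add: \<epsilon>_def)
    also have "\<dots> < \<eta> * 1" using eta T0 by (intro mult_strict_left_mono) auto
    finally show ?thesis by simp
  qed
  define K where "K = {p::real\<times>real. 0 \<le> snd p \<and> snd p \<le> T \<and> lt (snd p) \<le> fst p \<and> fst p \<le> rt (snd p)}"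
  define v where "v = (\<lambda>p::real\<times>real. s * rho (fst p) (snd p) - (a + b * fst p) + \<epsilon> * snd p)"
  have KC: "K \<subseteq> closed_region lt rt" by (auto simp: K_def closed_region_def)
  have c0: "continuous_on (closed_region lt rt) (\<lambda>p. rho (fst p) (snd p))"
    using hs unfolding heat_solution_def by (simp add: case_prod_unfold)
  have cont: "continuous_on K v" unfolding v_def
    by (intro continuous_intros continuous_on_subset[OF c0 KC])
  define cl where "cl = (\<lambda>t::real. max 0 (min T t))"
  have ccl: "continuous_on UNIV cl" unfolding cl_def by (intro continuous_intros)
  have clr: "cl ` UNIV \<subseteq> {0..}" by (auto simp: cl_def)
  have clt': "continuous_on UNIV (\<lambda>t. lt (cl t))"
    using continuous_on_compose2[OF clt ccl clr] .
  have crt': "continuous_on UNIV (\<lambda>t. rt (cl t))"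
    using continuous_on_compose2[OF crt ccl clr] .
  have Keq: "K = {p. 0 \<le> snd p} \<inter> {p. snd p \<le> T} \<inter> {p. lt (cl (snd p)) \<le> fst p} \<inter> {p. fst p \<le> rt (cl (snd p))}"
    by (auto simp: K_def cl_def)
  have "closed K" unfolding Keq
    by (intro closed_Int closed_Collect_le continuous_intros
        continuous_on_compose2[OF clt' continuous_on_snd] continuous_on_compose2[OF crt' continuous_on_snd]) auto
  moreover have "bounded K"
  proof (rule bounded_subset[OF bounded_cbox[of "(lt 0, 0)" "(rt 0, T)"]])
    show "K \<subseteq> cbox (lt 0, 0) (rt 0, T)"
    proof
      fix p assume "p \<in> K"
      then obtain x t where p: "p = (x,t)" "0 \<le> t" "t \<le> T" "lt t \<le> x" "x \<le> rt t"
        by (cases p) (auto simp: K_def)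
      have "lt 0 \<le> lt t" using mono_onD[OF mono, of 0 t] p by auto
      moreover have "rt t \<le> rt 0" using monotone_onD[OF anti, of 0 t] p by auto
      ultimately show "p \<in> cbox (lt 0, 0) (rt 0, T)" using p by (auto simp: cbox_Pair_iff)
    qed
  qed
  ultimately have "compact K" by (simp add: compact_eq_bounded_closed)
  moreover have p0K: "(x0,t0) \<in> K" using p0 by (simp add: K_def)
  ultimately obtain p where pK: "p \<in> K" and pmin: "\<forall>q\<in>K. v p \<le> v q"
    using continuous_attains_inf[OF _ _ cont] by blast
  obtain xs ts where pp: "p = (xs, ts)" by (cases p)
  have K1: "0 \<le> ts" "ts \<le> T" "lt ts \<le> xs" "xs \<le> rt ts" using pK pp by (auto simp: K_def)
  have "v p \<le> v (x0,t0)" using pmin p0K by blast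
  also have "v (x0,t0) = -\<eta> + \<epsilon>*t0" by (simp add: v_def \<eta>_def)
  also have "\<dots> \<le> -\<eta> + \<epsilon>*T" using eps p0 by simp
  finally have vneg: "v p < 0" using epsT by simp
  have uneg: "s*rho xs ts - (a+b*xs) < 0"
    using vneg eps K1 pp unfolding v_def by (smt (verit) mult_nonneg_nonneg fst_conv snd_conv)
  have ts0: "ts > 0"
  proof (rule ccontr)
    assume "\<not> ts > 0" then have "ts = 0" using K1 by simp
    then show False using bi K1 uneg by auto
  qed
  have xl: "lt ts < xs" using bl K1 uneg by (metis order.not_eq_order_implies_strict not_le)
  have xr: "xs < rt ts" using br K1 uneg by (metis order.not_eq_order_implies_strict not_le)
  define f where "f = (\<lambda>y. rho y ts)"
  define D where "D = deriv (deriv f) xs"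
  have hs2: "\<forall>x t. 0 < t \<and> lt t < x \<and> x < rt t \<longrightarrow>
        (\<lambda>y. rho y t) differentiable (at x) \<and>
        deriv (\<lambda>y. rho y t) differentiable (at x) \<and>
        ((\<lambda>s. rho x s) has_real_derivative deriv (deriv (\<lambda>y. rho y t)) x) (at t)"
    using hs unfolding heat_solution_def by blast
  have sD: "s * D \<ge> 0" unfolding D_def
  proof (rule spatial_min[OF xl xr])
    show "\<forall>y. lt ts < y \<and> y < rt ts \<longrightarrow> f differentiable at y"
      using hs2 ts0 unfolding f_def by blast
    show "deriv f differentiable at xs" using hs2 ts0 xl xr unfolding f_def by blast
    show "\<forall>y. lt ts < y \<and> y < rt ts \<longrightarrow> s * f xs - b * xs \<le> s * f y - b * y"
    proof (intro allI impI)
      fix y assume y: "lt ts < y \<and> y < rt ts"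
      then have "(y, ts) \<in> K" using K1 by (auto simp: K_def)
      then have "v p \<le> v (y,ts)" using pmin by blast
      then show "s * f xs - b * xs \<le> s * f y - b * y" using pp by (simp add: v_def f_def)
    qed
  qed
  define g where "g = (\<lambda>\<tau>. s*rho xs \<tau> - (a+b*xs) + \<epsilon>*\<tau>)"
  have "((\<lambda>\<tau>. rho xs \<tau>) has_real_derivative D) (at ts)"
    using hs2 ts0 xl xr unfolding D_def f_def by blast
  then have "(g has_real_derivative s*D + \<epsilon>) (at ts)"
    unfolding g_def by (auto intro!: derivative_eq_intros)
  from DERIV_pos_inc_left[OF this] sD eps obtain d where d: "d > 0"
    "\<forall>h>0. h < d \<longrightarrow> g (ts - h) < g ts" by force
  define h where "h = min (d/2) (ts/2)"
  have h: "h > 0" "h < d" "h \<le> ts" using d ts0 by (auto simp: h_def min_def)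
  have "lt (ts - h) \<le> lt ts" using mono_onD[OF mono, of "ts-h" ts] h by auto
  moreover have "rt ts \<le> rt (ts - h)" using monotone_onD[OF anti, of "ts-h" ts] h by auto
  ultimately have "(xs, ts - h) \<in> K" using K1 h xl xr by (auto simp: K_def)
  then have "v p \<le> v (xs, ts-h)" using pmin by blast
  moreover have "g (ts - h) < g ts" using d h by blast
  ultimately show False using pp by (simp add: v_def g_def)
qed

theorem lemma3p4:
  fixes l0 r0 \<tau> :: real
    and rho0 drho0 :: "real \<Rightarrow> real"
    and lt rt :: "real \<Rightarrow> real"
    and rho :: "real \<Rightarrow> real \<Rightarrow> real"
  assumes "l0 < r0"
    and "\<forall>x\<in>{l0..r0}. rho0 x \<in> {-1..1}"
    and "\<forall>x\<in>{l0..r0}. (rho0 has_real_derivative drho0 x) (at x within {l0..r0})"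
    and "\<exists>B. \<forall>x\<in>{l0..r0}. \<bar>drho0 x\<bar> \<le> B"
    and "rho0 l0 = 1" and "rho0 r0 = -1"
    and "mono_on {0..} lt" and "antimono_on {0..} rt"
    and "continuous_on {0..} lt" and "continuous_on {0..} rt"
    and "lt 0 = l0" and "rt 0 = r0"
    and "\<forall>t\<ge>0. lt t < rt t"
    and "heat_solution rho lt rt"
    and "\<forall>t\<ge>0. rho (lt t) t = 1 \<and> rho (rt t) t = -1"
    and "\<forall>x\<in>{l0..r0}. rho x 0 = rho0 x"
    and "\<tau> > 0"
    and "\<forall>t. 0 \<le> t \<and> t < \<tau> \<longrightarrow>
           lt t \<le> l0 + 2 * (1 / (4 * (SUP x\<in>{l0..r0}. \<bar>drho0 x\<bar>))) \<and>
           rt t \<ge> r0 - 2 * (1 / (4 * (SUP x\<in>{l0..r0}. \<bar>drho0 x\<bar>)))"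
  shows "(\<forall>t. 0 \<le> t \<and> t \<le> \<tau> \<longrightarrow> (\<forall>x. lt t \<le> x \<and>
            x \<le> l0 + 2 * (1 / (4 * (SUP x\<in>{l0..r0}. \<bar>drho0 x\<bar>))) \<longrightarrow> rho x t \<ge> 0)) \<and>
         (\<forall>t. 0 \<le> t \<and> t \<le> \<tau> \<longrightarrow> (\<forall>x.
            r0 - 2 * (1 / (4 * (SUP x\<in>{l0..r0}. \<bar>drho0 x\<bar>))) \<le> x \<and> x \<le> rt t \<longrightarrow> rho x t \<le> 0))"
proof -
  note A = assms
  define L where "L = (SUP x\<in>{l0..r0}. \<bar>drho0 x\<bar>)"
  have lb_eq: "2 * (1 / (4 * L)) = 1/(2*L)" by simp
  have Lb: "\<bar>drho0 x\<bar> \<le> L" if "x \<in> {l0..r0}" for x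
    unfolding L_def using A(4) that by (intro cSUP_upper) (auto simp: bdd_above_def)
  have der: "(rho0 has_derivative (\<lambda>h. drho0 x * h)) (at x within {a..b})"
    if "l0 \<le> a" "b \<le> r0" "x \<in> {a..b}" for a b x
  proof -
    have "(rho0 has_real_derivative drho0 x) (at x within {l0..r0})" using A(3) that by auto
    then have "(rho0 has_real_derivative drho0 x) (at x within {a..b})"
      by (rule DERIV_subset) (use that in auto)
    then show ?thesis by (simp add: has_field_derivative_def)
  qed
  have low: "rho0 x \<ge> 1 - L*(x - l0)" if "x \<in> {l0..r0}" for x
  proof -
    have "\<exists>z\<in>{l0..x}. rho0 x - rho0 l0 = drho0 z * (x - l0)"
    proof (rule mvt_very_simple[of l0 x rho0 "\<lambda>z h. drho0 z * h"])
      show "l0 \<le> x" using that by auto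
      show "(rho0 has_derivative (\<lambda>h. drho0 y * h)) (at y within {l0..x})" if "l0 \<le> y" "y \<le> x" for y
        by (rule der) (use that \<open>x \<in> {l0..r0}\<close> in auto)
    qed
    then obtain z where z: "z \<in> {l0..x}" "rho0 x - rho0 l0 = drho0 z * (x - l0)" by blast
    have "\<bar>drho0 z\<bar> \<le> L" using Lb z that by auto
    then have "-L \<le> drho0 z" by (simp add: abs_le_iff)
    then have "-L*(x-l0) \<le> drho0 z * (x - l0)" by (rule mult_right_mono) (use that in auto)
    moreover have "drho0 z * (x - l0) = rho0 x - 1" using z(2) A(5) by simp
    ultimately show ?thesis by (simp add: algebra_simps)
  qed
  have up: "rho0 x \<le> -1 + L*(r0 - x)" if "x \<in> {l0..r0}" for x
  proof -
    have "\<exists>z\<in>{x..r0}. rho0 r0 - rho0 x = drho0 z * (r0 - x)"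
    proof (rule mvt_very_simple[of x r0 rho0 "\<lambda>z h. drho0 z * h"])
      show "x \<le> r0" using that by auto
      show "(rho0 has_derivative (\<lambda>h. drho0 y * h)) (at y within {x..r0})" if "x \<le> y" "y \<le> r0" for y
        by (rule der) (use that \<open>x \<in> {l0..r0}\<close> in auto)
    qed
    then obtain z where z: "z \<in> {x..r0}" "rho0 r0 - rho0 x = drho0 z * (r0 - x)" by blast
    have "\<bar>drho0 z\<bar> \<le> L" using Lb z that by auto
    then have "-L \<le> drho0 z" by (simp add: abs_le_iff)
    then have "-L*(r0-x) \<le> drho0 z * (r0 - x)" by (rule mult_right_mono) (use that in auto)
    moreover have "drho0 z * (r0 - x) = -1 - rho0 x" using z(2) A(6) by simp
    ultimately show ?thesis by (simp add: algebra_simps)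
  qed
  have L2: "L*(r0-l0) \<ge> 2" using low[of r0] A(1,6) by auto
  have Lpos: "L > 0"
  proof (rule ccontr)
    assume "\<not> L > 0"
    then have "L*(r0-l0) \<le> 0" by (intro mult_nonpos_nonneg) (use A(1) in auto)
    with L2 show False by simp
  qed
  have L1: "1/L \<le> (r0-l0)/2" using L2 Lpos A(1) by (simp add: field_simps)
  define lb where "lb = l0 + 1/(2*L)"
  define rb where "rb = r0 - 1/(2*L)"
  have cl: "closure {0..<\<tau>} = {0..\<tau>}" using A(17) by simp
  have rtb: "rt t \<ge> rb" if "0 \<le> t" "t \<le> \<tau>" for t
  proof (rule continuous_ge_on_closure[where S="{0..<\<tau>}" and f=rt and x=t])
    show "continuous_on (closure {0..<\<tau>}) rt" unfolding cl
      by (rule continuous_on_subset[OF A(10)]) auto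
    show "t \<in> closure {0..<\<tau>}" unfolding cl using that by auto
    show "\<And>x. x \<in> {0..<\<tau>} \<Longrightarrow> rb \<le> rt x" using A(18) unfolding rb_def L_def by auto
  qed
  have ltb: "lt t \<le> lb" if "0 \<le> t" "t \<le> \<tau>" for t
  proof -
    have "-lb \<le> -lt t"
    proof (rule continuous_ge_on_closure[where S="{0..<\<tau>}" and f="\<lambda>t. - lt t" and x=t])
      show "continuous_on (closure {0..<\<tau>}) (\<lambda>t. - lt t)" unfolding cl
        by (intro continuous_intros continuous_on_subset[OF A(9)]) auto
      show "t \<in> closure {0..<\<tau>}" unfolding cl using that by auto
      show "\<And>x. x \<in> {0..<\<tau>} \<Longrightarrow> -lb \<le> - lt x" using A(18) unfolding lb_def L_def by auto
    qed
    then show ?thesis by simp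
  qed
  have ltl: "lt t \<ge> l0" if "0 \<le> t" for t using monotone_onD[OF A(7), of 0 t] that A(11) by auto
  have rtr: "rt t \<le> r0" if "0 \<le> t" for t using monotone_onD[OF A(8), of 0 t] that A(12) by auto
  define iL where "iL = 1/L"
  have iL: "iL > 0" "iL \<le> (r0-l0)/2" using Lpos L1 by (auto simp: iL_def)
  have hL: "1/(2*L) = iL/2" by (simp add: iL_def)
  have hL3: "3/(2*L) = 3*iL/2" by (simp add: iL_def)
  have lbrb: "lb \<le> rb" using iL A(1) unfolding lb_def rb_def hL by (simp add: field_simps)
  have rbl: "rb - l0 \<ge> 3/(2*L)" using iL A(1) unfolding rb_def hL hL3 by (simp add: field_simps)
  have lbr: "r0 - lb \<ge> 3/(2*L)" using iL A(1) unfolding lb_def hL hL3 by (simp add: field_simps)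
  have left: "\<forall>t x. 0\<le>t \<and> t\<le>\<tau> \<and> lt t \<le> x \<and> x \<le> rt t \<longrightarrow>
      1 * rho x t - ((1 + 2*L*l0) + (-2*L)*x) \<ge> 0"
  proof (rule core[OF A(14) A(7) A(8) A(9) A(10)])
    show "0 \<le> \<tau>" using A(17) by simp
    show "\<forall>t. 0 \<le> t \<and> t \<le> \<tau> \<longrightarrow> 0 \<le> 1 * rho (lt t) t - (1 + 2 * L * l0 + - 2 * L * lt t)"
    proof (intro allI impI)
      fix t assume t: "0 \<le> t \<and> t \<le> \<tau>"
      have "lt t \<ge> l0" using ltl t by auto
      then have "2*L*(lt t - l0) \<ge> 0" using Lpos by simp
      then show "0 \<le> 1 * rho (lt t) t - (1 + 2 * L * l0 + - 2 * L * lt t)" using A(15) t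
        by (simp add: algebra_simps)
    qed
    show "\<forall>t. 0 \<le> t \<and> t \<le> \<tau> \<longrightarrow> 0 \<le> 1 * rho (rt t) t - (1 + 2 * L * l0 + - 2 * L * rt t)"
    proof (intro allI impI)
      fix t assume t: "0 \<le> t \<and> t \<le> \<tau>"
      have "rt t - l0 \<ge> 3/(2*L)" using rtb[of t] t rbl by auto
      then have "2*L*(rt t - l0) \<ge> 2*L*(3/(2*L))" using Lpos by (intro mult_left_mono) auto
      then have "2*L*(rt t - l0) \<ge> 3" using Lpos by simp
      then show "0 \<le> 1 * rho (rt t) t - (1 + 2 * L * l0 + - 2 * L * rt t)" using A(15) t
        by (simp add: algebra_simps)
    qed
    show "\<forall>x. lt 0 \<le> x \<and> x \<le> rt 0 \<longrightarrow> 0 \<le> 1 * rho x 0 - (1 + 2 * L * l0 + - 2 * L * x)"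
    proof (intro allI impI)
      fix x assume x: "lt 0 \<le> x \<and> x \<le> rt 0"
      then have xi: "x \<in> {l0..r0}" using A(11,12) by auto
      have "L*(x-l0) \<ge> 0" using Lpos xi by simp
      then show "0 \<le> 1 * rho x 0 - (1 + 2 * L * l0 + - 2 * L * x)"
        using low[OF xi] A(16) xi by (simp add: algebra_simps)
    qed
  qed
  have right: "\<forall>t x. 0\<le>t \<and> t\<le>\<tau> \<and> lt t \<le> x \<and> x \<le> rt t \<longrightarrow>
      (-1) * rho x t - ((1 - 2*L*r0) + (2*L)*x) \<ge> 0"
  proof (rule core[OF A(14) A(7) A(8) A(9) A(10)])
    show "0 \<le> \<tau>" using A(17) by simp
    show "\<forall>t. 0 \<le> t \<and> t \<le> \<tau> \<longrightarrow> 0 \<le> (-1) * rho (lt t) t - ((1 - 2*L*r0) + (2*L)*lt t)"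
    proof (intro allI impI)
      fix t assume t: "0 \<le> t \<and> t \<le> \<tau>"
      have "r0 - lt t \<ge> 3/(2*L)" using ltb[of t] t lbr by auto
      then have "2*L*(r0 - lt t) \<ge> 2*L*(3/(2*L))" using Lpos by (intro mult_left_mono) auto
      then have "2*L*(r0 - lt t) \<ge> 3" using Lpos by simp
      then show "0 \<le> (-1) * rho (lt t) t - ((1 - 2*L*r0) + (2*L)*lt t)" using A(15) t
        by (simp add: algebra_simps)
    qed
    show "\<forall>t. 0 \<le> t \<and> t \<le> \<tau> \<longrightarrow> 0 \<le> (-1) * rho (rt t) t - ((1 - 2*L*r0) + (2*L)*rt t)"
    proof (intro allI impI)
      fix t assume t: "0 \<le> t \<and> t \<le> \<tau>"
      have "rt t \<le> r0" using rtr t by auto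
      then have "2*L*(r0 - rt t) \<ge> 0" using Lpos by simp
      then show "0 \<le> (-1) * rho (rt t) t - ((1 - 2*L*r0) + (2*L)*rt t)" using A(15) t
        by (simp add: algebra_simps)
    qed
    show "\<forall>x. lt 0 \<le> x \<and> x \<le> rt 0 \<longrightarrow> 0 \<le> (-1) * rho x 0 - ((1 - 2*L*r0) + (2*L)*x)"
    proof (intro allI impI)
      fix x assume x: "lt 0 \<le> x \<and> x \<le> rt 0"
      then have xi: "x \<in> {l0..r0}" using A(11,12) by auto
      have "L*(r0-x) \<ge> 0" using Lpos xi by simp
      then show "0 \<le> (-1) * rho x 0 - ((1 - 2*L*r0) + (2*L)*x)"
        using up[OF xi] A(16) xi by (simp add: algebra_simps)
    qed
  qed
  show ?thesis unfolding L_def[symmetric] lb_eq lb_def[symmetric] rb_def[symmetric]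
  proof (intro conjI allI impI)
    fix t x assume t: "0 \<le> t \<and> t \<le> \<tau>" and x: "lt t \<le> x \<and> x \<le> lb"
    have "x \<le> rt t" using x lbrb rtb[of t] t by auto
    then have "1 * rho x t - ((1 + 2*L*l0) + (-2*L)*x) \<ge> 0" using left t x by blast
    then have "rho x t \<ge> 1 - 2*L*(x - l0)" by (simp add: algebra_simps)
    moreover have "2*L*(x-l0) \<le> 2*L*(1/(2*L))" using x Lpos unfolding lb_def
      by (intro mult_left_mono) auto
    ultimately show "0 \<le> rho x t" using Lpos by simp
  next
    fix t x assume t: "0 \<le> t \<and> t \<le> \<tau>" and x: "rb \<le> x \<and> x \<le> rt t"
    have "lt t \<le> x" using x lbrb ltb[of t] t by auto
    then have "(-1) * rho x t - ((1 - 2*L*r0) + (2*L)*x) \<ge> 0" using right t x by blast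
    then have "-rho x t \<ge> 1 - 2*L*(r0 - x)" by (simp add: algebra_simps)
    moreover have "2*L*(r0-x) \<le> 2*L*(1/(2*L))" using x Lpos unfolding rb_def
      by (intro mult_left_mono) auto
    ultimately show "rho x t \<le> 0" using Lpos by simp
  qed
qed

end
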